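(* Let $C_0>0$, $\mathcal{U}_0=e^{C_0}/(1+e^{C_0})^2$, $m\in\mathcal{M}$, and let $\{\psi_1,\dots,\psi_{D}\}$ ($D=D_m$) be an orthonormal basis (for $\langle\cdot,\cdot\rangle_n$) of $\mathrm{span}\{\phi_k,k\in m\}$. For $\beta\in\mathbb{R}^D$ put $f_\beta=\sum_{j=1}^D\beta_j\psi_j$, and let $\Lambda_m$ be the set of $\beta$ such that $f_\beta\in\mathcal{S}_m\cap\mathbb{L}_\infty(C_0)$. If $\beta^*$ is any minimizer of $\beta\mapsto\gamma(f_\beta)$ over $\Lambda_m$, then for all $\beta\in\Lambda_m$, $$\frac{\mathcal{U}_0^2}{2}\|f_\beta-f_{\beta^*}\|_n^2\le\gamma(f_\beta)-\gamma(f_{\beta^*}).$$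
   Context: Observations $(Y_1,x_1),\dots,(Y_n,x_n)\in\{0,1\}\times\mathcal{X}$, deterministic $x_i$, independent $Y_i$ with $\mathbb{E}_{f_0}(Y_i)=\pi_{f_0}(x_i)$, $\pi_f(x)=e^{f(x)}/(1+e^{f(x)})$. $\gamma_n(f)=\frac1n\sum_{i=1}^n\{\log(1+e^{f(x_i)})-Y_if(x_i)\}$, $\gamma(f)=\mathbb{E}_{f_0}[\gamma_n(f)]$. $\langle f,g\rangle_n=\frac1n\sum_i f(x_i)g(x_i)$, $\|f\|_n^2=\langle f,f\rangle_n$. A dictionary $\{\phi_1,\dots,\phi_M\}$ is fixed; $\mathcal{M}$ is the set of subsets $m\subset\{1,\dots,M\}$, $\mathcal{S}_m=\{\sum_{j\in m}\beta_j\phi_j\}$, $D_m=\dim\mathrm{span}\{\phi_j,j\in m\}$. $\mathbb{L}_\infty(C_0)=\{f:\max_{1\le i\le n}|f(x_i)|\le C_0\}$. *)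

theory Defs
  imports "HOL-Analysis.Analysis"
begin

(* Design points are x 0, ..., x (n-1) (0-based indexing of x_1..x_n). *)

definition logit_pi :: "real \<Rightarrow> real" where
  "logit_pi t = exp t / (1 + exp t)"

definition pi_f :: "('x \<Rightarrow> real) \<Rightarrow> 'x \<Rightarrow> real" where
  "pi_f f t = logit_pi (f t)"

definition gamma_n :: "nat \<Rightarrow> (nat \<Rightarrow> 'x) \<Rightarrow> (nat \<Rightarrow> real) \<Rightarrow> ('x \<Rightarrow> real) \<Rightarrow> real" where
  "gamma_n n x Y f = (1 / real n) * (\<Sum>i<n. ln (1 + exp (f (x i))) - Y i * f (x i))"

(* gamma(f) = E_{f0}[gamma_n(f)]; gamma_n is affine in Y and E(Y_i) = pi_{f0}(x_i),
   so the expectation is gamma_n with Y_i replaced by pi_{f0}(x_i). *)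
definition gamma_exp :: "nat \<Rightarrow> (nat \<Rightarrow> 'x) \<Rightarrow> ('x \<Rightarrow> real) \<Rightarrow> ('x \<Rightarrow> real) \<Rightarrow> real" where
  "gamma_exp n x f0 f = gamma_n n x (\<lambda>i. pi_f f0 (x i)) f"

definition inner_n :: "nat \<Rightarrow> (nat \<Rightarrow> 'x) \<Rightarrow> ('x \<Rightarrow> real) \<Rightarrow> ('x \<Rightarrow> real) \<Rightarrow> real" where
  "inner_n n x f g = (1 / real n) * (\<Sum>i<n. f (x i) * g (x i))"

definition norm_n :: "nat \<Rightarrow> (nat \<Rightarrow> 'x) \<Rightarrow> ('x \<Rightarrow> real) \<Rightarrow> real" where
  "norm_n n x f = sqrt (inner_n n x f f)"

definition S_m :: "(nat \<Rightarrow> 'x \<Rightarrow> real) \<Rightarrow> nat set \<Rightarrow> ('x \<Rightarrow> real) set" where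
  "S_m phi m = {f. \<exists>b. f = (\<lambda>t. \<Sum>j\<in>m. b j * phi j t)}"

definition L_inf :: "nat \<Rightarrow> (nat \<Rightarrow> 'x) \<Rightarrow> real \<Rightarrow> ('x \<Rightarrow> real) set" where
  "L_inf n x C0 = {f. \<forall>i<n. \<bar>f (x i)\<bar> \<le> C0}"

definition f_beta :: "nat \<Rightarrow> (nat \<Rightarrow> 'x \<Rightarrow> real) \<Rightarrow> (nat \<Rightarrow> real) \<Rightarrow> 'x \<Rightarrow> real" where
  "f_beta D psi \<beta> = (\<lambda>t. \<Sum>j<D. \<beta> j * psi j t)"

(* psi_0..psi_{D-1} is an orthonormal basis, for <.,.>_n, of span{phi_k, k in m}:
   each psi_j lies in the span, they are orthonormal, and every phi_k (k in m)
   is (as an element of the space with inner product <.,.>_n, i.e. on the design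
   points) a linear combination of them. *)
definition onb_n :: "nat \<Rightarrow> (nat \<Rightarrow> 'x) \<Rightarrow> (nat \<Rightarrow> 'x \<Rightarrow> real) \<Rightarrow> nat set \<Rightarrow> nat \<Rightarrow> (nat \<Rightarrow> 'x \<Rightarrow> real) \<Rightarrow> bool" where
  "onb_n n x phi m D psi \<longleftrightarrow>
     (\<forall>j<D. psi j \<in> S_m phi m) \<and>
     (\<forall>j<D. \<forall>k<D. inner_n n x (psi j) (psi k) = (if j = k then 1 else 0)) \<and>
     (\<forall>k\<in>m. \<exists>c. \<forall>i<n. phi k (x i) = (\<Sum>j<D. c j * psi j (x i)))"

definition Lambda_m :: "nat \<Rightarrow> (nat \<Rightarrow> 'x) \<Rightarrow> (nat \<Rightarrow> 'x \<Rightarrow> real) \<Rightarrow> nat set \<Rightarrow> real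
     \<Rightarrow> nat \<Rightarrow> (nat \<Rightarrow> 'x \<Rightarrow> real) \<Rightarrow> (nat \<Rightarrow> real) set" where
  "Lambda_m n x phi m C0 D psi = {\<beta>. f_beta D psi \<beta> \<in> S_m phi m \<inter> L_inf n x C0}"

end

theory Submission
  imports Defs
begin


lemma U0_bound:
  fixes C u :: real assumes "\<bar>u\<bar> \<le> C"
  shows "exp C / (1 + exp C)^2 \<le> exp u / (1 + exp u)^2"
proof -
  define a where "a = exp u"
  define c where "c = exp C"
  have a0: "a > 0" and c0: "c > 0" using a_def c_def by auto
  have "a \<le> c" unfolding a_def c_def using assms by simp
  have "u \<ge> - C" using assms by simp
  hence "exp (-C) \<le> a" unfolding a_def by simp
  hence "1 \<le> a * c" unfolding c_def using exp_minus_inverse[of C]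
    by (metis a_def c_def exp_gt_zero mult.commute mult_le_cancel_left_pos)
  have "(c - a) * (a*c - 1) \<ge> 0" using \<open>a \<le> c\<close> \<open>1 \<le> a*c\<close> by simp
  hence "c * (1+a)^2 \<le> a * (1+c)^2" by (simp add: algebra_simps power2_eq_square)
  thus ?thesis unfolding a_def[symmetric] c_def[symmetric]
    using a0 c0 by (simp add: divide_simps mult.commute)
qed

lemma strong_mid:
  fixes C u v :: real
  assumes "\<bar>u\<bar> \<le> C" "\<bar>v\<bar> \<le> C"
  defines "U \<equiv> exp C / (1 + exp C)^2"
  shows "ln (1 + exp ((u+v)/2)) \<le> (ln (1 + exp u) + ln (1 + exp v))/2 - U/8 * (v-u)^2"
proof -
  define h where "h = (\<lambda>t::real. ln (1 + exp t) - U/2 * t^2)"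
  have cv: "convex_on {-C..C} h"
  proof (rule f''_ge0_imp_convex[where f' = "\<lambda>t. exp t / (1 + exp t) - U * t"
        and f'' = "\<lambda>t. exp t / (1 + exp t)^2 - U"])
    show "convex {-C..C}" by simp
    fix t :: real assume t: "t \<in> {-C..C}"
    have p: "1 + exp t > 0" by (smt (verit) exp_gt_zero)
    have e1: "((\<lambda>t. 1 + exp t) has_real_derivative 0 + exp t) (at t)"
      by (intro DERIV_add DERIV_const DERIV_exp)
    have l1: "((\<lambda>t. ln (1 + exp t)) has_real_derivative inverse (1 + exp t) * (0 + exp t)) (at t)"
      by (rule DERIV_chain2[of ln, OF DERIV_ln[OF p] e1])
    have q1: "((\<lambda>t. t^2) has_real_derivative real 2 * t ^ (2 - Suc 0)) (at t)"
      by (rule DERIV_pow)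
    have q2: "((\<lambda>t. U/2 * t^2) has_real_derivative U/2 * (real 2 * t ^ (2 - Suc 0))) (at t)"
      by (rule DERIV_cmult[OF q1])
    show "(h has_real_derivative exp t / (1 + exp t) - U * t) (at t)"
      unfolding h_def
      by (rule DERIV_cong[OF DERIV_diff[OF l1 q2]]) (simp add: field_simps)
    have d1: "((\<lambda>t. exp t / (1 + exp t)) has_real_derivative
         (exp t * (1 + exp t) - (0 + exp t) * exp t) / ((1 + exp t) ^ Suc (Suc 0))) (at t)"
      by (rule DERIV_quotient[OF DERIV_exp e1]) (use p in simp)
    show "((\<lambda>t. exp t / (1 + exp t) - U * t) has_real_derivative exp t / (1 + exp t)^2 - U) (at t)"
      by (rule DERIV_cong[OF DERIV_diff[OF d1 DERIV_cmult_Id]]) (simp add: field_simps power2_eq_square)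
    show "0 \<le> exp t / (1 + exp t)^2 - U" using U0_bound[of t C] t unfolding U_def by auto
  qed
  have "h ((1 - 1/2) *\<^sub>R u + (1/2) *\<^sub>R v) \<le> (1 - 1/2) * h u + (1/2) * h v"
    by (rule convex_onD[OF cv]) (use assms in auto)
  hence "h ((u+v)/2) \<le> (h u + h v)/2" by (simp add: field_simps)
  thus ?thesis unfolding h_def by (simp add: field_simps power2_eq_square)
qed

lemma lin_aux:
  fixes L A B c y a b :: real
  assumes "L \<le> (A + B)/2 - c"
  shows "L - y * ((a + b)/2) \<le> (A - y * a + (B - y * b))/2 - c"
proof -
  have "y * ((a + b)/2) = (y * a + y * b)/2" by (simp add: algebra_simps)
  thus ?thesis using assms by (simp add: field_simps)
qed

lemma lin_aux2:
  fixes a m b k K :: real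
  assumes "a \<le> m" "K = 2 * k" "m \<le> (a + b)/2 - k"
  shows "K \<le> b - a"
  using assms by (simp add: field_simps)

theorem lemma6p2:
  fixes n M D :: nat and x :: "nat \<Rightarrow> 'x" and f0 :: "'x \<Rightarrow> real"
    and phi psi :: "nat \<Rightarrow> 'x \<Rightarrow> real" and m :: "nat set"
    and C0 :: real and \<beta>s \<beta> :: "nat \<Rightarrow> real"
  assumes "n > 0"
    and "C0 > 0"
    and "m \<subseteq> {1..M}"
    and "onb_n n x phi m D psi"
    and "\<beta>s \<in> Lambda_m n x phi m C0 D psi"
    and "\<forall>\<beta>'\<in>Lambda_m n x phi m C0 D psi.
           gamma_exp n x f0 (f_beta D psi \<beta>s) \<le> gamma_exp n x f0 (f_beta D psi \<beta>')"
    and "\<beta> \<in> Lambda_m n x phi m C0 D psi"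
  shows "(exp C0 / (1 + exp C0)^2)^2 / 2
           * (norm_n n x (\<lambda>t. f_beta D psi \<beta> t - f_beta D psi \<beta>s t))^2
         \<le> gamma_exp n x f0 (f_beta D psi \<beta>) - gamma_exp n x f0 (f_beta D psi \<beta>s)"
proof -
  define U where "U = exp C0 / (1 + exp C0)^2"
  define fa where "fa = f_beta D psi \<beta>s"
  define fb where "fb = f_beta D psi \<beta>"
  define \<beta>m where "\<beta>m = (\<lambda>j. (\<beta>s j + \<beta> j) / 2)"
  define fm where "fm = f_beta D psi \<beta>m"
  have fm_eq: "fm t = (fa t + fb t) / 2" for t
    unfolding fm_def fa_def fb_def f_beta_def \<beta>m_def
    by (simp add: sum_divide_distrib[symmetric] sum.distrib[symmetric] algebra_simps)
  have Ea: "fa \<in> S_m phi m" "\<forall>i<n. \<bar>fa (x i)\<bar> \<le> C0"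
    using assms(5) unfolding fa_def Lambda_m_def L_inf_def by auto
  have Eb: "fb \<in> S_m phi m" "\<forall>i<n. \<bar>fb (x i)\<bar> \<le> C0"
    using assms(7) unfolding fb_def Lambda_m_def L_inf_def by auto
  obtain ba where ba: "fa = (\<lambda>t. \<Sum>j\<in>m. ba j * phi j t)" using Ea(1) unfolding S_m_def by auto
  obtain bb where bb: "fb = (\<lambda>t. \<Sum>j\<in>m. bb j * phi j t)" using Eb(1) unfolding S_m_def by auto
  have "fm = (\<lambda>t. \<Sum>j\<in>m. ((ba j + bb j)/2) * phi j t)"
    by (rule ext) (simp add: fm_eq ba bb sum_divide_distrib[symmetric] sum.distrib[symmetric] algebra_simps)
  hence "fm \<in> S_m phi m" unfolding S_m_def by (intro CollectI exI[of _ "\<lambda>j. (ba j + bb j)/2"])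
  moreover have "\<forall>i<n. \<bar>fm (x i)\<bar> \<le> C0" 
  proof (intro allI impI)
    fix i assume "i < n"
    hence "\<bar>fa (x i)\<bar> \<le> C0" "\<bar>fb (x i)\<bar> \<le> C0" using Ea(2) Eb(2) by auto
    thus "\<bar>fm (x i)\<bar> \<le> C0" unfolding fm_eq by (simp add: abs_le_iff)
  qed
  ultimately have "\<beta>m \<in> Lambda_m n x phi m C0 D psi"
    unfolding Lambda_m_def L_inf_def fm_def by auto
  hence Gle: "gamma_exp n x f0 fa \<le> gamma_exp n x f0 fm" using assms(6) unfolding fa_def fm_def by blast
  define y where "y = (\<lambda>i. pi_f f0 (x i))"
  define T where "T = (\<lambda>f i. ln (1 + exp (f (x i))) - y i * f (x i))"
  have G: "gamma_exp n x f0 f = (1 / real n) * (\<Sum>i<n. T f i)" for f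
    unfolding gamma_exp_def gamma_n_def T_def y_def by simp
  have trm: "T fm i \<le> (T fa i + T fb i)/2 - U/8 * (fb (x i) - fa (x i))^2" if "i < n" for i
  proof -
    have "ln (1 + exp ((fa (x i) + fb (x i))/2)) \<le> (ln (1 + exp (fa (x i))) + ln (1 + exp (fb (x i))))/2
             - U/8 * (fb (x i) - fa (x i))^2"
      using strong_mid[of "fa (x i)" C0 "fb (x i)"] Ea(2) Eb(2) that unfolding U_def by auto
    thus ?thesis unfolding T_def fm_eq by (rule lin_aux)
  qed
  have sumineq: "(\<Sum>i<n. T fm i) \<le> ((\<Sum>i<n. T fa i) + (\<Sum>i<n. T fb i))/2 - U/8 * (\<Sum>i<n. (fb (x i) - fa (x i))^2)"
  proof -
    have "(\<Sum>i<n. T fm i) \<le> (\<Sum>i<n. (T fa i + T fb i)/2 - U/8 * (fb (x i) - fa (x i))^2)"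
      by (rule sum_mono) (use trm in auto)
    also have "\<dots> = ((\<Sum>i<n. T fa i) + (\<Sum>i<n. T fb i))/2 - U/8 * (\<Sum>i<n. (fb (x i) - fa (x i))^2)"
      by (simp add: sum_subtractf sum_divide_distrib[symmetric] sum.distrib sum_distrib_left)
    finally show ?thesis .
  qed
  define S where "S = (\<Sum>i<n. (fb (x i) - fa (x i))^2)"
  have S0: "S \<ge> 0" unfolding S_def by (simp add: sum_nonneg)
  have nrm: "(norm_n n x (\<lambda>t. fb t - fa t))^2 = S / real n"
    unfolding norm_n_def inner_n_def S_def
    by (simp add: sum_nonneg power2_eq_square)
  have U0: "U \<ge> 0" unfolding U_def by simp
  have U14: "U \<le> 1/4"
  proof -
    have "4 * exp C0 \<le> (1 + exp C0)^2"
    proof -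
      have "(1 + exp C0)^2 = (1 - exp C0)^2 + 4 * exp C0" by (simp add: power2_eq_square algebra_simps)
      moreover have "0 \<le> (1 - exp C0)^2" by simp
      ultimately show ?thesis by (metis le_add_same_cancel2)
    qed
    thus ?thesis unfolding U_def by (simp add: divide_simps)
  qed
  have UU: "U^2/2 \<le> U/4"
  proof -
    have "U * U \<le> U * (1/4)" using mult_left_mono[OF U14 U0] by simp
    thus ?thesis using U0 by (simp add: power2_eq_square)
  qed
  have main: "U/4 * S \<le> (\<Sum>i<n. T fb i) - (\<Sum>i<n. T fa i)"
  proof -
    have "(\<Sum>i<n. T fa i) \<le> (\<Sum>i<n. T fm i)"
      using Gle assms(1) unfolding G by (simp add: divide_le_cancel)
    moreover have "U/4 * S = 2 * (U/8 * S)" by simp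
    moreover have "(\<Sum>i<n. T fm i) \<le> ((\<Sum>i<n. T fa i) + (\<Sum>i<n. T fb i))/2 - U/8 * S"
      using sumineq unfolding S_def .
    ultimately show ?thesis using lin_aux2 by metis
  qed
  have "U^2/2 * S \<le> (\<Sum>i<n. T fb i) - (\<Sum>i<n. T fa i)"
    using order_trans[OF mult_right_mono[OF UU S0] main] by simp
  hence "U^2/2 * S / real n \<le> ((\<Sum>i<n. T fb i) - (\<Sum>i<n. T fa i)) / real n"
    by (rule divide_right_mono) (use assms(1) in simp)
  thus ?thesis unfolding U_def[symmetric] fa_def[symmetric] fb_def[symmetric]
    using nrm G[of fa] G[of fb] by (simp add: algebra_simps diff_divide_distrib)
qed

end
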